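(* Let $p,q$ be primes and $c,d\in\mathbb N$. In the algebra $(\mathbb N,\cdot,\mathbb N)$, $$p:q::_m c:d\iff (p=q\text{ and }c=d)\ \text{or}\ (p\neq q\text{ and }c=pu\text{ and }d=qu\text{ for some }u\in\mathbb N).$$
   Context: $(\mathbb N,\cdot,\mathbb N)$ is the algebra with universe the natural numbers $\mathbb N$, multiplication, and every natural number as a constant. A justification is a pair of terms $s\to t$ with the variables of $t$ among those of $s$; monolinear justifications are those where $s,t$ contain only one fixed variable $x$, occurring at most once in $s$ and at most once in $t$. $\uparrow^m(a\to b)$ is the set of monolinear justifications $s\to t$ with $a=s(\mathbf o)$, $b=t(\mathbf o)$ for some value $\mathbf o$; $\uparrow^m(a\to b:\!\cdot\,c\to d):=\uparrow^m(a\to b)\cap\uparrow^m(c\to d)$. A monolinear justification is trivial if it lies in all sets $\uparrow^m(a'\to b':\!\cdot\,c'\to d')$. $a\to b:\!\cdot_m\,c\to d$ holds iff either (i) all justifications in $\uparrow^m(a\to b)\cup\uparrow^m(c\to d)$ are trivial, or (ii) $J_d:=\uparrow^m(a\to b:\!\cdot\,c\to d)$ contains a non-trivial justification and for every $d'$, $J_d\subseteq J_{d'}$ implies $J_{d'}$ contains a non-trivial justification and $J_{d'}\subseteq J_d$ (ignoring trivial justifications). $a:b::_m c:d$ iff $a\to b:\!\cdot_m\,c\to d$, $b\to a:\!\cdot_m\,d\to c$, $c\to d:\!\cdot_m\,a\to b$, $d\to c:\!\cdot_m\,b\to a$ all hold. *)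

theory Defs
  imports "HOL-Computational_Algebra.Primes"
begin

text \<open>Terms of the algebra (N, *, N) in the single fixed variable x:
  the variable, a constant for every natural number, and multiplication.\<close>
datatype mterm = X | Cst nat | Mul mterm mterm

primrec eval :: "nat \<Rightarrow> mterm \<Rightarrow> nat" where
  "eval v X = v"
| "eval v (Cst n) = n"
| "eval v (Mul s t) = eval v s * eval v t"

primrec xcount :: "mterm \<Rightarrow> nat" where
  "xcount X = 1"
| "xcount (Cst n) = 0"
| "xcount (Mul s t) = xcount s + xcount t"

text \<open>A justification s -> t (variables of t among those of s) which is monolinear.\<close>
definition monolinear :: "mterm \<times> mterm \<Rightarrow> bool" where
  "monolinear j \<longleftrightarrow> xcount (fst j) \<le> 1 \<and> xcount (snd j) \<le> 1 \<and>
     (xcount (snd j) > 0 \<longrightarrow> xcount (fst j) > 0)"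

definition up :: "nat \<Rightarrow> nat \<Rightarrow> (mterm \<times> mterm) set" where
  "up a b = {j. monolinear j \<and> (\<exists>v. a = eval v (fst j) \<and> b = eval v (snd j))}"

definition up2 :: "nat \<Rightarrow> nat \<Rightarrow> nat \<Rightarrow> nat \<Rightarrow> (mterm \<times> mterm) set" where
  "up2 a b c d = up a b \<inter> up c d"

definition trivial :: "mterm \<times> mterm \<Rightarrow> bool" where
  "trivial j \<longleftrightarrow> monolinear j \<and> (\<forall>a' b' c' d'. j \<in> up2 a' b' c' d')"

definition nontriv :: "(mterm \<times> mterm) set \<Rightarrow> (mterm \<times> mterm) set" where
  "nontriv J = {j \<in> J. \<not> trivial j}"

definition arrow_prop :: "nat \<Rightarrow> nat \<Rightarrow> nat \<Rightarrow> nat \<Rightarrow> bool" where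
  "arrow_prop a b c d \<longleftrightarrow>
     (\<forall>j \<in> up a b \<union> up c d. trivial j) \<or>
     (nontriv (up2 a b c d) \<noteq> {} \<and>
      (\<forall>d'. nontriv (up2 a b c d) \<subseteq> nontriv (up2 a b c d') \<longrightarrow>
             nontriv (up2 a b c d') \<noteq> {} \<and> nontriv (up2 a b c d') \<subseteq> nontriv (up2 a b c d)))"

definition analogy :: "nat \<Rightarrow> nat \<Rightarrow> nat \<Rightarrow> nat \<Rightarrow> bool" where
  "analogy a b c d \<longleftrightarrow> arrow_prop a b c d \<and> arrow_prop b a d c \<and>
     arrow_prop c d a b \<and> arrow_prop d c b a"

end

theory Submission
  imports Defs
begin

primrec cf :: "mterm \<Rightarrow> nat" where
  "cf X = 1"
| "cf (Cst n) = n"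
| "cf (Mul s t) = cf s * cf t"

lemma eval_cf: "eval v t = cf t * v ^ xcount t"
  by (induct t) (auto simp: power_add ac_simps)

lemma up_iff: "(s, t) \<in> up a b \<longleftrightarrow> monolinear (s, t) \<and>
   (\<exists>v. a = cf s * v ^ xcount s \<and> b = cf t * v ^ xcount t)"
  by (simp add: up_def eval_cf)

lemma xc_cases:
  assumes "monolinear (s, t)"
  shows "(xcount s = 0 \<and> xcount t = 0) \<or> (xcount s = 1 \<and> xcount t = 1) \<or>
         (xcount s = 1 \<and> xcount t = 0)"
  using assms unfolding monolinear_def by auto

lemma no_trivial: "\<not> trivial j"
proof
  assume "trivial j"
  obtain s t where j: "j = (s, t)" by (cases j)
  from \<open>trivial j\<close> have "j \<in> up 1 0" "j \<in> up 0 1"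
    unfolding trivial_def up2_def by blast+
  then obtain v w where m: "monolinear (s,t)"
    and 1: "1 = cf s * v ^ xcount s" "0 = cf t * v ^ xcount t"
    and 2: "0 = cf s * w ^ xcount s" "1 = cf t * w ^ xcount t"
    unfolding j up_iff by blast
  from xc_cases[OF m] show False
    using 1 2 by auto
qed

lemma arrow_nonempty:
  assumes "arrow_prop a b c d"
  shows "\<exists>j. j \<in> up a b \<and> j \<in> up c d"
proof -
  have "(Cst a, Cst b) \<in> up a b"
    by (simp add: up_iff monolinear_def)
  hence "\<not> (\<forall>j \<in> up a b \<union> up c d. trivial j)" using no_trivial by blast
  with assms have "nontriv (up2 a b c d) \<noteq> {}" unfolding arrow_prop_def by blast
  thus ?thesis unfolding nontriv_def up2_def by blast
qed

lemma arrow_intro: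
  assumes "j \<in> up a b" "j \<in> up c d" "\<And>d'. j \<in> up c d' \<Longrightarrow> d' = d"
  shows "arrow_prop a b c d"
proof -
  have "j \<in> nontriv (up2 a b c d)"
    using assms no_trivial unfolding nontriv_def up2_def by blast
  moreover have "nontriv (up2 a b c d') \<noteq> {} \<and> nontriv (up2 a b c d') \<subseteq> nontriv (up2 a b c d)"
    if "nontriv (up2 a b c d) \<subseteq> nontriv (up2 a b c d')" for d'
  proof -
    from that \<open>j \<in> nontriv (up2 a b c d)\<close> have "j \<in> up c d'"
      unfolding nontriv_def up2_def by blast
    hence "d' = d" by (rule assms(3))
    thus ?thesis using \<open>j \<in> nontriv (up2 a b c d)\<close> by blast
  qed
  ultimately show ?thesis unfolding arrow_prop_def by blast
qed

lemma L1:
  assumes "j \<in> up x y" "j \<in> up z z" "z > 0"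
  shows "x = y \<or> y = z"
proof -
  obtain s t where j: "j = (s, t)" by (cases j)
  from assms obtain v w where m: "monolinear (s,t)"
    and 1: "x = cf s * v ^ xcount s" "y = cf t * v ^ xcount t"
    and 2: "z = cf s * w ^ xcount s" "z = cf t * w ^ xcount t"
    unfolding j up_iff by blast
  from xc_cases[OF m] show ?thesis
  proof (elim disjE conjE)
    assume "xcount s = 1" "xcount t = 1"
    with 2 assms(3) have "cf s = cf t" by auto
    with 1 \<open>xcount s = 1\<close> \<open>xcount t = 1\<close> show ?thesis by simp
  qed (use 1 2 in auto)
qed

lemma L2:
  assumes "prime p" "prime q" "p \<noteq> q" "j \<in> up p q" "j \<in> up c d"
  shows "(\<exists>u. c = p * u \<and> d = q * u) \<or> d = q"
proof -
  obtain s t where j: "j = (s, t)" by (cases j)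
  from assms obtain v w where m: "monolinear (s,t)"
    and 1: "p = cf s * v ^ xcount s" "q = cf t * v ^ xcount t"
    and 2: "c = cf s * w ^ xcount s" "d = cf t * w ^ xcount t"
    unfolding j up_iff by blast
  from xc_cases[OF m] show ?thesis
  proof (elim disjE conjE)
    assume a: "xcount s = 1" "xcount t = 1"
    have "v dvd p" "v dvd q" using 1 a by simp_all
    hence "v = 1"
      using assms(1,2,3) by (metis prime_nat_iff)
    thus ?thesis using 1 2 a by auto
  qed (use 1 2 in auto)
qed

theorem mainTheorem11:
  fixes p q c d :: nat
  assumes "prime p" and "prime q"
  shows "analogy p q c d \<longleftrightarrow>
           ((p = q \<and> c = d) \<or> (p \<noteq> q \<and> (\<exists>u. c = p * u \<and> d = q * u)))"
proof
  assume an: "analogy p q c d"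
  show "(p = q \<and> c = d) \<or> (p \<noteq> q \<and> (\<exists>u. c = p * u \<and> d = q * u))"
  proof (cases "p = q")
    case True
    have pos: "p > 0" using assms(1) prime_gt_0_nat by blast
    from an have "arrow_prop c d p p" "arrow_prop d c p p"
      unfolding analogy_def True by auto
    then obtain j k where "j \<in> up c d" "j \<in> up p p" "k \<in> up d c" "k \<in> up p p"
      using arrow_nonempty by meson
    hence "c = d \<or> d = p" "d = c \<or> c = p" using L1 pos by blast+
    thus ?thesis using True by auto
  next
    case False
    from an have "arrow_prop p q c d" "arrow_prop q p d c"
      unfolding analogy_def by auto
    then obtain j k where "j \<in> up p q" "j \<in> up c d" "k \<in> up q p" "k \<in> up d c"
      using arrow_nonempty by meson
    hence "(\<exists>u. c = p * u \<and> d = q * u) \<or> d = q" "(\<exists>u. d = q * u \<and> c = p * u) \<or> c = p"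
      using L2 assms False by blast+
    hence "\<exists>u. c = p * u \<and> d = q * u" by (metis mult.right_neutral)
    thus ?thesis using False by blast
  qed
next
  assume h: "(p = q \<and> c = d) \<or> (p \<noteq> q \<and> (\<exists>u. c = p * u \<and> d = q * u))"
  have pos: "p > 0" "q > 0" using assms prime_gt_0_nat by blast+
  have diag: "arrow_prop a a e e" for a e
    by (rule arrow_intro[where j = "(X, X)"]) (auto simp: up_iff monolinear_def)
  have lin: "arrow_prop a b (a*u) (b*u)" "arrow_prop (a*u) (b*u) a b" if "a > 0" for a b u
  proof -
    let ?j = "(Mul (Cst a) X, Mul (Cst b) X)"
    have ml: "monolinear ?j" by (simp add: monolinear_def)
    show "arrow_prop a b (a*u) (b*u)"
    proof (rule arrow_intro[where j = ?j])
      fix d' assume "?j \<in> up (a*u) d'"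
      then obtain v where "a*u = a*v" "d' = b*v" by (auto simp: up_iff)
      thus "d' = b*u" using that by simp
    qed (use ml in \<open>auto simp: up_iff intro: exI[of _ 1] exI[of _ u]\<close>)
    show "arrow_prop (a*u) (b*u) a b"
    proof (rule arrow_intro[where j = ?j])
      fix d' assume "?j \<in> up a d'"
      then obtain v where "a = a*v" "d' = b*v" by (auto simp: up_iff)
      thus "d' = b" using that by simp
    qed (use ml in \<open>auto simp: up_iff intro: exI[of _ 1] exI[of _ u]\<close>)
  qed
  from h show "analogy p q c d"
  proof
    assume "p = q \<and> c = d"
    thus ?thesis unfolding analogy_def using diag by auto
  next
    assume "p \<noteq> q \<and> (\<exists>u. c = p * u \<and> d = q * u)"
    then obtain u where "c = p*u" "d = q*u" by blast
    thus ?thesis unfolding analogy_def using lin pos by auto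
  qed
qed

end
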